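(* Fix $h\in[H]$ and $(x_h,a_h)\in\mathcal A(\mathcal X_h)$. Let $(\gamma^t_h(x_h,a_h))_{t\in[T]}$ be positive random variables with $\gamma^t_h(x_h,a_h)$ being $\mathcal F_{t-1}$-measurable, let $\tau$ be a stopping time with respect to $(\mathcal F_t)$ with values in $\{0,\dots,T\}$, and let $\gamma'>0$ be a deterministic constant such that $\gamma^t_h(x_h,a_h)\ge\gamma'$ for all $t\le\tau$. Define $\tilde\ell^t_h(x_h,a_h)=\mathbb 1\{x^t_h=x_h,a^t_h=a_h\}(1-r^t_h)/(\mu^t_{1:h}(x_h,a_h)+\gamma^t_h(x_h,a_h))$, $\tilde L^t_h=\sum_{k\le t}\tilde\ell^k_h$ and $L^t_h(x_h,a_h)=\sum_{k\le t}\ell^{\nu^k}_h(x_h,a_h)$. Then for any $\delta'\in(0,1)$, with probability at least $1-\delta'$, $$\tilde L^\tau_h(x_h,a_h)-L^\tau_h(x_h,a_h)\le\frac{\log(1/\delta')}{2\gamma'}.$$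
   Context: Setting: an episodic imperfect-information game with horizon $H$ and perfect recall for the max-player, whose information sets are $\mathcal X=\bigsqcup_h\mathcal X_h$ with action sets $\mathcal A(x)$; $\mathcal A(\mathcal X_h)=\{(x_h,a_h):x_h\in\mathcal X_h,a_h\in\mathcal A(x_h)\}$. For a max-player policy $\mu$, $\mu_{1:h}(x_h,a_h)=\prod_{h'\le h}\mu_{h'}(a_{h'}|x_{h'})$ along the unique history of $(x_h,a_h)$. For a min-player policy $\nu$, $\ell^\nu_h(x_h,a_h)=p^\nu_{1:h}(x_h)(1-r^\nu_h(x_h,a_h))$, where $p^\nu_{1:h}(x_h)$ is the induced reach probability of $x_h$ (for the actions in its history) and $r^\nu_h\in[0,1]$ the expected reward. Over $T$ episodes, the max-player's policy $\mu^t$ and opponent's policy $\nu^t$ are $\mathcal F_{t-1}$-measurable, where $\mathcal F_0$ is trivial and $\mathcal F_t$ is generated by $\nu^1,\dots,\nu^{t+1}$ and all observations (information sets $x^k_h$, actions $a^k_h$, rewards $r^k_h\in[0,1]$) of episodes $k\le t$; conditionally on $\mathcal F_{t-1}$, $\mathbb E[\mathbb 1\{x^t_h=x_h,a^t_h=a_h\}(1-r^t_h)\mid\mathcal F_{t-1}]=\mu^t_{1:h}(x_h,a_h)\ell^{\nu^t}_h(x_h,a_h)$. *)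

theory Defs
  imports "HOL-Probability.Probability"
begin

text \<open>Quantities attached to a fixed pair (x_h,a_h) at a fixed step h.
  X t w : indicator 1{x^t_h = x_h, a^t_h = a_h} of episode t,
  r t w : reward r^t_h of episode t,
  mu t w : mu^t_{1:h}(x_h,a_h),
  ell t w : ell^{nu^t}_h(x_h,a_h),
  gam t w : gamma^t_h(x_h,a_h).\<close>

definition loss_est ::
  "(nat \<Rightarrow> 'a \<Rightarrow> real) \<Rightarrow> (nat \<Rightarrow> 'a \<Rightarrow> real) \<Rightarrow> (nat \<Rightarrow> 'a \<Rightarrow> real) \<Rightarrow> (nat \<Rightarrow> 'a \<Rightarrow> real)
    \<Rightarrow> nat \<Rightarrow> 'a \<Rightarrow> real" where
  "loss_est X r mu gam t w = X t w * (1 - r t w) / (mu t w + gam t w)"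

definition cum_loss_est ::
  "(nat \<Rightarrow> 'a \<Rightarrow> real) \<Rightarrow> (nat \<Rightarrow> 'a \<Rightarrow> real) \<Rightarrow> (nat \<Rightarrow> 'a \<Rightarrow> real) \<Rightarrow> (nat \<Rightarrow> 'a \<Rightarrow> real)
    \<Rightarrow> nat \<Rightarrow> 'a \<Rightarrow> real" where
  "cum_loss_est X r mu gam t w = (\<Sum>k\<in>{1..t}. loss_est X r mu gam k w)"

definition cum_loss :: "(nat \<Rightarrow> 'a \<Rightarrow> real) \<Rightarrow> nat \<Rightarrow> 'a \<Rightarrow> real" where
  "cum_loss ell t w = (\<Sum>k\<in>{1..t}. ell k w)"

end

theory Submission
  imports Defs
begin


lemma ln_lower: fixes z::real assumes "0 \<le> z" shows "2*z/(2+z) \<le> ln (1+z)"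
proof -
  have "(\<lambda>z. ln (1+z) - 2*z/(2+z)) 0 \<le> (\<lambda>z. ln (1+z) - 2*z/(2+z)) z"
  proof (rule DERIV_nonneg_imp_nondecreasing[OF assms])
    fix x :: real assume x0: "0 \<le> x" and x1: "x \<le> z"
    have x: "0 \<le> x \<and> x \<le> z" using x0 x1 by simp
    have d: "((\<lambda>z. ln (1+z) - 2*z/(2+z)) has_real_derivative (1/(1+x) - 4/(2+x)^2)) (at x)"
      using x by (auto intro!: derivative_eq_intros simp: field_simps power2_eq_square)
    have xx: "0 \<le> x*x" by simp
    have "4/(2+x)^2 \<le> 1/(1+x)" using x xx by (simp add: divide_simps power2_eq_square algebra_simps)
    with d show "\<exists>y. ((\<lambda>z. ln (1+z) - 2*z/(2+z)) has_real_derivative y) (at x) \<and> 0 \<le> y"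
      by (intro exI[of _ "1/(1+x) - 4/(2+x)^2"]) auto
  qed
  then show ?thesis by simp
qed

lemma cc_bound: fixes m g::real assumes "0 \<le> m" "0 < g"
  shows "(exp (2*g/(m+g)) - 1) * m \<le> 2*g"
proof (cases "m = 0")
  case True then show ?thesis using assms by simp
next
  case False
  then have m: "m > 0" using assms by simp
  define z where "z = 2*g/m"
  have z: "z \<ge> 0" using m assms by (simp add: z_def)
  have "2*g/(m+g) = 2*z/(2+z)" using m assms by (simp add: z_def field_simps)
  also have "\<dots> \<le> ln (1+z)" by (rule ln_lower[OF z])
  finally have "exp (2*g/(m+g)) \<le> 1 + z"
    using z by (metis exp_le_cancel_iff exp_ln add_nonneg_pos zero_less_one add.commute
        less_add_same_cancel1 zero_less_one order_le_less_trans ln_ge_iff)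
  then have "exp (2*g/(m+g)) - 1 \<le> z" by simp
  then have "(exp (2*g/(m+g)) - 1) * m \<le> z * m" using m by (simp add: mult_right_mono)
  also have "z*m = 2*g" using m by (simp add: z_def)
  finally show ?thesis .
qed

lemma exp_convex_bound: fixes b z :: real assumes "0 \<le> z" "z \<le> 1"
  shows "exp (b*z) \<le> 1 + z * (exp b - 1)"
proof -
  have "exp ((1 - z) *\<^sub>R 0 + z *\<^sub>R b) \<le> (1 - z) * exp 0 + z * exp b"
    by (rule convex_onD[OF exp_convex]) (use assms in auto)
  then show ?thesis by (simp add: algebra_simps)
qed

lemma mm: fixes x y A B :: real
  shows "0 \<le> x \<and> x \<le> A \<Longrightarrow> 0 \<le> y \<and> y \<le> B \<Longrightarrow> 0 \<le> x*y \<and> x*y \<le> A*B"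
  by (auto intro: mult_mono order_trans)

theorem mainTheorem5:
  fixes M :: "'a measure" and F :: "nat \<Rightarrow> 'a measure"
    and T :: nat and \<tau> :: "'a \<Rightarrow> nat"
    and X r mu ell gam :: "nat \<Rightarrow> 'a \<Rightarrow> real"
    and \<gamma>' \<delta>' :: real
  assumes prob: "prob_space M"
    and filt: "filtration (space M) F"
    and subalg: "\<And>t. subalgebra M (F t)"
    and F0: "sets (F 0) = {{}, space M}"
    and X_meas: "\<And>t. t \<in> {1..T} \<Longrightarrow> X t \<in> borel_measurable (F t)"
    and X_ind: "\<And>t w. t \<in> {1..T} \<Longrightarrow> w \<in> space M \<Longrightarrow> X t w \<in> {0, 1}"
    and r_meas: "\<And>t. t \<in> {1..T} \<Longrightarrow> r t \<in> borel_measurable (F t)"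
    and r_range: "\<And>t w. t \<in> {1..T} \<Longrightarrow> w \<in> space M \<Longrightarrow> 0 \<le> r t w \<and> r t w \<le> 1"
    and mu_meas: "\<And>t. t \<in> {1..T} \<Longrightarrow> mu t \<in> borel_measurable (F (t - 1))"
    and mu_range: "\<And>t w. t \<in> {1..T} \<Longrightarrow> w \<in> space M \<Longrightarrow> 0 \<le> mu t w \<and> mu t w \<le> 1"
    and ell_meas: "\<And>t. t \<in> {1..T} \<Longrightarrow> ell t \<in> borel_measurable (F (t - 1))"
    and ell_range: "\<And>t w. t \<in> {1..T} \<Longrightarrow> w \<in> space M \<Longrightarrow> 0 \<le> ell t w \<and> ell t w \<le> 1"
    and cond_exp: "\<And>t. t \<in> {1..T} \<Longrightarrow>
       AE w in M. real_cond_exp M (F (t - 1)) (\<lambda>w. X t w * (1 - r t w)) w = mu t w * ell t w"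
    and gam_meas: "\<And>t. t \<in> {1..T} \<Longrightarrow> gam t \<in> borel_measurable (F (t - 1))"
    and gam_pos: "\<And>t w. t \<in> {1..T} \<Longrightarrow> w \<in> space M \<Longrightarrow> gam t w > 0"
    and stop: "stopping_time F \<tau>"
    and \<tau>_range: "\<And>w. w \<in> space M \<Longrightarrow> \<tau> w \<le> T"
    and \<gamma>'_pos: "\<gamma>' > 0"
    and gam_lower: "AE w in M. \<forall>t\<in>{1..\<tau> w}. \<gamma>' \<le> gam t w"
    and \<delta>': "0 < \<delta>'" "\<delta>' < 1"
  shows "measure M {w \<in> space M.
           cum_loss_est X r mu gam (\<tau> w) w - cum_loss ell (\<tau> w) w \<le> ln (1 / \<delta>') / (2 * \<gamma>')}
         \<ge> 1 - \<delta>'"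

proof -
  interpret prob_space M by (rule prob)
  have fmono: "f \<in> borel_measurable (F j)" if ij: "i \<le> j" and f: "f \<in> borel_measurable (F i)"
    for i j :: nat and f :: "'a \<Rightarrow> real"
    using f filtration.space_F[OF filt, of i] filtration.space_F[OF filt, of j]
        filtration.sets_F_mono[OF filt ij] unfolding measurable_def by auto
  define Ind where "Ind k w = (if k \<le> \<tau> w then 1 else 0::real)" for k w
  define D where "D k w = Ind k w * (loss_est X r mu gam k w - ell k w)" for k w
  define S where "S t w = (\<Sum>k\<in>{1..t}. D k w)" for t w
  define Y where "Y t w = exp (2*\<gamma>'*S t w)" for t w
  have predInd: "Measurable.pred (F s) (\<lambda>w. Suc s \<le> \<tau> w)" for s
    using stopping_timeD2[OF stop, of s] by (simp add: Suc_le_eq)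
  have measInd: "Ind (Suc s) \<in> borel_measurable (F s)" for s
    unfolding Ind_def using predInd[of s] by measurable
  have measD: "D k \<in> borel_measurable (F k)" if k: "k \<in> {1..T}" for k
  proof -
    obtain s where ks: "k = Suc s" using k by (cases k) auto
    have [measurable]: "X k \<in> borel_measurable (F k)" "r k \<in> borel_measurable (F k)"
      using X_meas r_meas k by auto
    have [measurable]: "mu k \<in> borel_measurable (F k)" "gam k \<in> borel_measurable (F k)"
       "ell k \<in> borel_measurable (F k)" "Ind k \<in> borel_measurable (F k)"
      using fmono[OF _ mu_meas[OF k]] fmono[OF _ gam_meas[OF k]] fmono[OF _ ell_meas[OF k]]
        fmono[OF _ measInd[of s]] ks by auto
    show ?thesis unfolding D_def loss_est_def by measurable
  qed
  have measS: "S t \<in> borel_measurable (F t)" if "t \<le> T" for t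
    unfolding S_def using that by (intro borel_measurable_sum fmono[OF _ measD]) auto
  have measY: "Y t \<in> borel_measurable (F t)" if "t \<le> T" for t
    unfolding Y_def using measS[OF that] by measurable
  have measYM: "Y t \<in> borel_measurable M" if "t \<le> T" for t
    using measurable_from_subalg[OF subalg measY[OF that]] .
  have Ypos: "Y t w > 0" for t w unfolding Y_def by simp
  have hZ: "0 \<le> X k w * (1 - r k w) \<and> X k w * (1 - r k w) \<le> 1" if "k \<in> {1..T}" "w \<in> space M" for k w
    using X_ind[OF that] r_range[OF that] by auto
  have Dbound: "AE w in M. \<forall>k\<in>{1..T}. D k w \<le> 1/\<gamma>'"
    using gam_lower AE_space
  proof (eventually_elim)
    case (elim w)
    show ?case
    proof
      fix k assume k: "k \<in> {1..T}"
      show "D k w \<le> 1/\<gamma>'"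
      proof (cases "k \<le> \<tau> w")
        case True
        then have g: "\<gamma>' \<le> gam k w" using elim k by auto
        have "loss_est X r mu gam k w \<le> 1/\<gamma>'"
          unfolding loss_est_def
          using hZ[OF k elim(2)] mu_range[OF k elim(2)] g \<gamma>'_pos
          by (intro frac_le) auto
        then show ?thesis using True ell_range[OF k elim(2)] by (simp add: D_def Ind_def)
      next
        case False then show ?thesis using \<gamma>'_pos by (simp add: D_def Ind_def)
      qed
    qed
  qed
  have Ybound: "AE w in M. \<forall>t\<le>T. Y t w \<le> exp (2 * real T)"
    using Dbound
  proof (eventually_elim)
    case (elim w)
    show ?case
    proof (intro allI impI)
      fix t assume t: "t \<le> T"
      have "S t w \<le> (\<Sum>k\<in>{1..t}. 1/\<gamma>')"
        unfolding S_def using elim t by (intro sum_mono) auto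
      also have "\<dots> = real t / \<gamma>'" by simp
      finally have "2*\<gamma>'*S t w \<le> 2*\<gamma>'*(real t/\<gamma>')" using \<gamma>'_pos by (intro mult_left_mono) auto
      also have "\<dots> \<le> 2 * real T" using \<gamma>'_pos t by simp
      finally show "Y t w \<le> exp (2 * real T)" unfolding Y_def by simp
    qed
  qed
  have intY: "integrable M (Y t)" if "t \<le> T" for t
  proof (rule integrable_const_bound[where B="exp (2 * real T)"])
    show "AE x in M. norm (Y t x) \<le> exp (2 * real T)"
      using Ybound by eventually_elim (use Ypos that in \<open>auto simp: less_imp_le\<close>)
  qed (rule measYM[OF that])
  have step: "(\<integral>w. Y (Suc s) w \<partial>M) \<le> (\<integral>w. Y s w \<partial>M)" if sT: "Suc s \<le> T" for s
  proof -
    have t: "Suc s \<in> {1..T}" using sT by auto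
    have sT': "s \<le> T" using sT by simp
    interpret sfs: sigma_finite_subalgebra M "F s"
      by (rule finite_measure_subalgebra_is_sigma_finite)
        (simp add: finite_measure_subalgebra_def finite_measure_subalgebra_axioms_def subalg finite_measure_axioms)
    define Z where "Z = (\<lambda>w. X (Suc s) w * (1 - r (Suc s) w))"
    define cc where "cc w = exp (2*\<gamma>'/(mu (Suc s) w + \<gamma>')) - 1" for w
    define a where "a w = 2*\<gamma>' * Ind (Suc s) w * ell (Suc s) w" for w
    define P where "P w = Y s w * exp (- a w)" for w
    define G where "G w = P w * Ind (Suc s) w * cc w" for w
    have [measurable]: "Y s \<in> borel_measurable (F s)" using measY[OF sT'] .
    have [measurable]: "mu (Suc s) \<in> borel_measurable (F s)" "ell (Suc s) \<in> borel_measurable (F s)"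
      "Ind (Suc s) \<in> borel_measurable (F s)"
      using mu_meas[OF t] ell_meas[OF t] measInd[of s] by auto
    have [measurable]: "X (Suc s) \<in> borel_measurable M" "r (Suc s) \<in> borel_measurable M"
      using measurable_from_subalg[OF subalg X_meas[OF t]] measurable_from_subalg[OF subalg r_meas[OF t]] by auto
    have mGF[measurable]: "G \<in> borel_measurable (F s)"
      unfolding G_def P_def a_def cc_def by measurable
    have maF[measurable]: "a \<in> borel_measurable (F s)"
      unfolding a_def by measurable
    have [measurable]: "a \<in> borel_measurable M" using measurable_from_subalg[OF subalg maF] .
    have mPF[measurable]: "P \<in> borel_measurable (F s)"
      unfolding P_def a_def by measurable
    have [measurable]: "G \<in> borel_measurable M" "P \<in> borel_measurable M"
      "mu (Suc s) \<in> borel_measurable M" "ell (Suc s) \<in> borel_measurable M"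
      using measurable_from_subalg[OF subalg mGF] measurable_from_subalg[OF subalg mPF]
        measurable_from_subalg[OF subalg mu_meas[OF t]] measurable_from_subalg[OF subalg ell_meas[OF t]]
      by auto
    have [measurable]: "Z \<in> borel_measurable M" unfolding Z_def by measurable
    have [measurable]: "Y (Suc s) \<in> borel_measurable M" using measYM sT by auto
    have Ind01: "0 \<le> Ind (Suc s) w \<and> Ind (Suc s) w \<le> 1" for w by (simp add: Ind_def)
    have Zr: "0 \<le> Z w \<and> Z w \<le> 1" if "w \<in> space M" for w using hZ[OF t that] by (simp add: Z_def)
    have mur: "0 \<le> mu (Suc s) w \<and> mu (Suc s) w \<le> 1" if "w \<in> space M" for w using mu_range[OF t that] .
    have ellr: "0 \<le> ell (Suc s) w \<and> ell (Suc s) w \<le> 1" if "w \<in> space M" for w using ell_range[OF t that] .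
    have ar: "0 \<le> a w \<and> a w \<le> 2*\<gamma>'" if "w \<in> space M" for w
      using mm[OF Ind01[of w] ellr[OF that]] \<gamma>'_pos
      by (auto simp: a_def mult.assoc intro: order_trans[OF mult_left_mono[of _ 1]])
    have ccr: "0 \<le> cc w \<and> cc w \<le> exp 2" if "w \<in> space M" for w
    proof -
      have "2*\<gamma>'/(mu (Suc s) w + \<gamma>') \<le> 2" using mur[OF that] \<gamma>'_pos by (simp add: divide_le_eq)
      moreover have "0 \<le> 2*\<gamma>'/(mu (Suc s) w + \<gamma>')" using mur[OF that] \<gamma>'_pos by simp
      ultimately show ?thesis unfolding cc_def by (smt (verit) exp_ge_zero exp_le_cancel_iff one_le_exp_iff)
    qed
    have Pr: "0 \<le> P w \<and> P w \<le> exp (2 * real T) * 1" if "w \<in> space M" "Y s w \<le> exp (2 * real T)" for w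
      unfolding P_def using ar[OF that(1)] that(2) Ypos[of s w]
      by (intro mm) auto
    have Gr: "0 \<le> G w \<and> G w \<le> exp (2 * real T) * 1 * 1 * exp 2" if "w \<in> space M" "Y s w \<le> exp (2 * real T)" for w
      unfolding G_def by (intro mm Pr[OF that] Ind01 ccr[OF that(1)])
    have GZr: "0 \<le> G w * Z w \<and> G w * Z w \<le> exp (2 * real T) * 1 * 1 * exp 2 * 1" if "w \<in> space M" "Y s w \<le> exp (2 * real T)" for w
      by (intro mm Gr[OF that] Zr[OF that(1)])
    have GMr: "0 \<le> G w * (mu (Suc s) w * ell (Suc s) w) \<and> G w * (mu (Suc s) w * ell (Suc s) w) \<le> exp (2 * real T) * 1 * 1 * exp 2 * (1*1)" if "w \<in> space M" "Y s w \<le> exp (2 * real T)" for w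
      by (intro mm Gr[OF that] mur[OF that(1)] ellr[OF that(1)])
    have Par: "0 \<le> P w * a w \<and> P w * a w \<le> exp (2 * real T) * 1 * (2*\<gamma>')" if "w \<in> space M" "Y s w \<le> exp (2 * real T)" for w
      by (intro mm Pr[OF that] ar[OF that(1)])
    have AEY: "AE w in M. w \<in> space M \<and> Y s w \<le> exp (2 * real T)"
      using Ybound AE_space by eventually_elim (use sT in auto)
    have intP: "integrable M P"
    proof (rule integrable_const_bound[where B="exp (2 * real T) * 1"])
      show "AE w in M. norm (P w) \<le> exp (2 * real T) * 1"
        using AEY by eventually_elim (use Pr in \<open>fastforce\<close>)
    qed measurable
    have intGZ: "integrable M (\<lambda>w. G w * Z w)"
    proof (rule integrable_const_bound[where B="exp (2 * real T) * 1 * 1 * exp 2 * 1"])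
      show "AE w in M. norm ((\<lambda>w. G w * Z w) w) \<le> exp (2 * real T) * 1 * 1 * exp 2 * 1"
        using AEY by eventually_elim (use GZr in \<open>fastforce\<close>)
    qed measurable
    have intGM: "integrable M (\<lambda>w. G w * (mu (Suc s) w * ell (Suc s) w))"
    proof (rule integrable_const_bound[where B="exp (2 * real T) * 1 * 1 * exp 2 * (1*1)"])
      show "AE w in M. norm ((\<lambda>w. G w * (mu (Suc s) w * ell (Suc s) w)) w) \<le> exp (2 * real T) * 1 * 1 * exp 2 * (1*1)"
        using AEY by eventually_elim (use GMr in \<open>fastforce\<close>)
    qed measurable
    have intPa: "integrable M (\<lambda>w. P w * a w)"
    proof (rule integrable_const_bound[where B="exp (2 * real T) * 1 * (2*\<gamma>')"])
      show "AE w in M. norm ((\<lambda>w. P w * a w) w) \<le> exp (2 * real T) * 1 * (2*\<gamma>')"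
        using AEY by eventually_elim (use Par in \<open>fastforce\<close>)
    qed measurable
    have key: "AE w in M. Y (Suc s) w \<le> P w + G w * Z w"
      using gam_lower AE_space
    proof eventually_elim
      case (elim w)
      have YS: "Y (Suc s) w = Y s w * exp (2*\<gamma>' * D (Suc s) w)"
        by (simp add: Y_def S_def distrib_left exp_add)
      show ?case
      proof (cases "Suc s \<le> \<tau> w")
        case False
        then show ?thesis using YS by (simp add: D_def Ind_def G_def P_def a_def)
      next
        case True
        then have g: "\<gamma>' \<le> gam (Suc s) w" using elim by auto
        have I1: "Ind (Suc s) w = 1" using True by (simp add: Ind_def)
        have le0: "loss_est X r mu gam (Suc s) w = Z w / (mu (Suc s) w + gam (Suc s) w)"
          by (simp add: loss_est_def Z_def)
        have le1: "loss_est X r mu gam (Suc s) w \<le> Z w / (mu (Suc s) w + \<gamma>')"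
          unfolding le0
          using Zr[OF elim(2)] mur[OF elim(2)] g \<gamma>'_pos
          by (intro divide_left_mono) (auto simp: add_pos_nonneg)
        have "2*\<gamma>' * loss_est X r mu gam (Suc s) w \<le> (2*\<gamma>'/(mu (Suc s) w + \<gamma>')) * Z w"
          using mult_left_mono[OF le1, of "2*\<gamma>'"] \<gamma>'_pos by simp
        then have "exp (2*\<gamma>' * loss_est X r mu gam (Suc s) w) \<le> exp ((2*\<gamma>'/(mu (Suc s) w + \<gamma>')) * Z w)"
          by simp
        also have "\<dots> \<le> 1 + Z w * cc w"
          unfolding cc_def using Zr[OF elim(2)] by (intro exp_convex_bound) auto
        finally have e1: "exp (2*\<gamma>' * loss_est X r mu gam (Suc s) w) \<le> 1 + Z w * cc w" .
        have "exp (2*\<gamma>' * D (Suc s) w) = exp (2*\<gamma>' * loss_est X r mu gam (Suc s) w) * exp (- a w)"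
          by (simp add: D_def I1 a_def right_diff_distrib exp_diff exp_minus field_simps)
        also have "\<dots> \<le> (1 + Z w * cc w) * exp (- a w)"
          using e1 by (intro mult_right_mono) auto
        finally have "Y s w * exp (2*\<gamma>' * D (Suc s) w) \<le> Y s w * ((1 + Z w * cc w) * exp (- a w))"
          using Ypos[of s w] by (intro mult_left_mono) auto
        then show ?thesis using YS by (simp add: G_def P_def I1 algebra_simps)
      qed
    qed
    have ce: "AE w in M. real_cond_exp M (F s) Z w = mu (Suc s) w * ell (Suc s) w"
      using cond_exp[OF t] by (simp add: Z_def)
    have "(\<integral>w. Y (Suc s) w \<partial>M) \<le> (\<integral>w. P w + G w * Z w \<partial>M)"
      by (rule integral_mono_AE[OF intY[OF sT] _ key]) (use intP intGZ in auto)
    also have "\<dots> = (\<integral>w. P w \<partial>M) + (\<integral>w. G w * Z w \<partial>M)"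
      using intP intGZ by simp
    also have "(\<integral>w. G w * Z w \<partial>M) = (\<integral>w. G w * real_cond_exp M (F s) Z w \<partial>M)"
      using sfs.real_cond_exp_intg(2)[OF intGZ mGF] by simp
    also have "\<dots> = (\<integral>w. G w * (mu (Suc s) w * ell (Suc s) w) \<partial>M)"
      using ce by (intro integral_cong_AE) auto
    also have "\<dots> \<le> (\<integral>w. P w * a w \<partial>M)"
    proof (rule integral_mono[OF intGM intPa])
      fix w assume w: "w \<in> space M"
      have cb: "cc w * mu (Suc s) w \<le> 2*\<gamma>'"
        unfolding cc_def using cc_bound[of "mu (Suc s) w" \<gamma>'] mur[OF w] \<gamma>'_pos by simp
      have nn: "0 \<le> P w * Ind (Suc s) w * ell (Suc s) w"
        using Ypos[of s w] Ind01[of w] ellr[OF w] by (simp add: P_def)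
      have "G w * (mu (Suc s) w * ell (Suc s) w) = (P w * Ind (Suc s) w * ell (Suc s) w) * (cc w * mu (Suc s) w)"
        by (simp add: G_def mult_ac)
      also have "\<dots> \<le> (P w * Ind (Suc s) w * ell (Suc s) w) * (2*\<gamma>')"
        using mult_left_mono[OF cb nn] .
      also have "\<dots> = P w * a w" by (simp add: a_def mult_ac)
      finally show "G w * (mu (Suc s) w * ell (Suc s) w) \<le> P w * a w" .
    qed
    also have "(\<integral>w. P w \<partial>M) + (\<integral>w. P w * a w \<partial>M) = (\<integral>w. P w + P w * a w \<partial>M)"
      using intP intPa by simp
    also have "\<dots> \<le> (\<integral>w. Y s w \<partial>M)"
    proof (rule integral_mono)
      show "integrable M (\<lambda>w. P w + P w * a w)" using intP intPa by simp
      show "integrable M (Y s)" using intY[OF sT'] .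
      fix w assume w: "w \<in> space M"
      have "exp (- a w) * (1 + a w) \<le> 1"
        using exp_ge_add_one_self[of "a w"] by (simp add: exp_minus field_simps)
      then have "Y s w * (exp (- a w) * (1 + a w)) \<le> Y s w * 1"
        using Ypos[of s w] by (intro mult_left_mono) auto
      then show "P w + P w * a w \<le> Y s w" by (simp add: P_def algebra_simps)
    qed
    finally show ?thesis by simp
  qed
  have bound: "(\<integral>w. Y t w \<partial>M) \<le> 1" if "t \<le> T" for t
    using that
  proof (induction t)
    case 0
    have "Y 0 = (\<lambda>w. 1)" by (simp add: Y_def S_def fun_eq_iff)
    then show ?case by (simp add: prob_space)
  next
    case (Suc s)
    then show ?case using step[of s] by simp
  qed
  define c0 where "c0 = ln (1/\<delta>') / (2*\<gamma>')"
  have Seq: "S T w = cum_loss_est X r mu gam (\<tau> w) w - cum_loss ell (\<tau> w) w" if w: "w \<in> space M" for w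
  proof -
    have "S T w = (\<Sum>k\<in>{1..T}. if k \<le> \<tau> w then loss_est X r mu gam k w - ell k w else 0)"
      unfolding S_def D_def Ind_def by (intro sum.cong) auto
    also have "\<dots> = (\<Sum>k\<in>{k\<in>{1..T}. k \<le> \<tau> w}. loss_est X r mu gam k w - ell k w)"
      by (rule sum.inter_filter[symmetric]) simp
    also have "{k\<in>{1..T}. k \<le> \<tau> w} = {1..\<tau> w}" using \<tau>_range[OF w] by auto
    finally show ?thesis by (simp add: cum_loss_est_def cum_loss_def sum_subtractf)
  qed
  have [measurable]: "S T \<in> borel_measurable M" using measurable_from_subalg[OF subalg measS[of T]] by simp
  have [measurable]: "Y T \<in> borel_measurable M" using measYM[of T] by simp
  define B where "B = {w \<in> space M. c0 < S T w}"
  have Bsets: "B \<in> sets M" unfolding B_def by measurable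
  have eqA: "{w \<in> space M. cum_loss_est X r mu gam (\<tau> w) w - cum_loss ell (\<tau> w) w \<le> ln (1 / \<delta>') / (2 * \<gamma>')}
      = space M - B"
    using Seq by (auto simp: B_def c0_def)
  have "B \<subseteq> {w \<in> space M. Y T w \<ge> 1/\<delta>'}"
  proof
    fix w assume "w \<in> B"
    then have w: "w \<in> space M" "c0 < S T w" by (auto simp: B_def)
    have "2*\<gamma>'*c0 < 2*\<gamma>'*S T w" using w(2) \<gamma>'_pos by simp
    then have "exp (2*\<gamma>'*c0) < Y T w" unfolding Y_def by simp
    moreover have "exp (2*\<gamma>'*c0) = 1/\<delta>'" using \<gamma>'_pos \<delta>' by (simp add: c0_def)
    ultimately show "w \<in> {w \<in> space M. Y T w \<ge> 1/\<delta>'}" using w by simp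
  qed
  then have "measure M B \<le> measure M {w \<in> space M. Y T w \<ge> 1/\<delta>'}"
    by (intro finite_measure_mono) measurable
  also have "\<dots> \<le> (\<integral>w. Y T w \<partial>M) / (1/\<delta>')"
    by (rule integral_Markov_inequality_measure[OF intY[of T] sets.top])
      (use \<delta>' Ypos in \<open>auto simp: less_imp_le\<close>)
  also have "\<dots> \<le> 1 / (1/\<delta>')"
    using bound[of T] \<delta>' by (intro divide_right_mono) auto
  also have "\<dots> = \<delta>'" by simp
  finally have mB: "measure M B \<le> \<delta>'" .
  have "measure M (space M - B) = 1 - measure M B" using prob_compl[OF Bsets] .
  then show ?thesis using mB eqA by simp
qed


end
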